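(* Let $G$ be a connected graph which is not a tree. If the length of the longest cycle in $G$ is at most $4$, then $G$ has no good vertex.
   Context: All graphs are finite, simple, undirected. For a connected graph $G$, the Wiener index is $W(G)=\sum_{\{u,v\}\subseteq V(G)} \mathrm{dist}_G(u,v)$, the sum over unordered pairs of distinct vertices; the Wiener index of a disconnected graph is defined to be $\infty$. A vertex $v$ of a connected graph $G$ is good if $W(G)=W(G-v)$, where $G-v$ is obtained by deleting $v$ and its incident edges. *)

theory Defs
  imports Main "HOL-Library.Extended_Nat"
begin

definition simple_graph :: "'a set \<Rightarrow> 'a set set \<Rightarrow> bool" where
  "simple_graph V E \<longleftrightarrow> finite V \<and>
     (\<forall>e\<in>E. \<exists>u v. e = {u, v} \<and> u \<in> V \<and> v \<in> V \<and> u \<noteq> v)"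

text \<open>A walk given as its vertex sequence; its length is the number of edges.\<close>
definition is_walk :: "'a set \<Rightarrow> 'a set set \<Rightarrow> 'a list \<Rightarrow> bool" where
  "is_walk V E xs \<longleftrightarrow> xs \<noteq> [] \<and> set xs \<subseteq> V \<and>
     (\<forall>i. Suc i < length xs \<longrightarrow> {xs ! i, xs ! Suc i} \<in> E)"

definition connected_graph :: "'a set \<Rightarrow> 'a set set \<Rightarrow> bool" where
  "connected_graph V E \<longleftrightarrow> V \<noteq> {} \<and>
     (\<forall>u\<in>V. \<forall>v\<in>V. \<exists>xs. is_walk V E xs \<and> hd xs = u \<and> last xs = v)"

definition dist :: "'a set \<Rightarrow> 'a set set \<Rightarrow> 'a \<Rightarrow> 'a \<Rightarrow> nat" where
  "dist V E u v = (LEAST n. \<exists>xs. is_walk V E xs \<and> hd xs = u \<and> last xs = v \<and> length xs = Suc n)"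

definition wiener :: "'a set \<Rightarrow> 'a set set \<Rightarrow> enat" where
  "wiener V E = (if connected_graph V E
      then enat ((\<Sum>u\<in>V. \<Sum>v\<in>V. dist V E u v) div 2) else \<infinity>)"

definition del_vertex_V :: "'a set \<Rightarrow> 'a \<Rightarrow> 'a set" where
  "del_vertex_V V v = V - {v}"

definition del_vertex_E :: "'a set set \<Rightarrow> 'a \<Rightarrow> 'a set set" where
  "del_vertex_E E v = {e \<in> E. v \<notin> e}"

definition good_vertex :: "'a set \<Rightarrow> 'a set set \<Rightarrow> 'a \<Rightarrow> bool" where
  "good_vertex V E v \<longleftrightarrow> v \<in> V \<and>
     wiener V E = wiener (del_vertex_V V v) (del_vertex_E E v)"

text \<open>A cycle of length k = length xs \<ge> 3: distinct vertices, consecutive ones adjacent,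
  and the last adjacent to the first.\<close>
definition is_cycle :: "'a set \<Rightarrow> 'a set set \<Rightarrow> 'a list \<Rightarrow> bool" where
  "is_cycle V E xs \<longleftrightarrow> length xs \<ge> 3 \<and> distinct xs \<and> is_walk V E xs \<and>
     {last xs, hd xs} \<in> E"

definition is_tree :: "'a set \<Rightarrow> 'a set set \<Rightarrow> bool" where
  "is_tree V E \<longleftrightarrow> connected_graph V E \<and> \<not> (\<exists>xs. is_cycle V E xs)"

end

theory Submission
  imports Defs
begin

fun wk :: "'a set \<Rightarrow> 'a set set \<Rightarrow> 'a list \<Rightarrow> bool" where
  "wk V E [] = False"
| "wk V E [x] = (x \<in> V)"
| "wk V E (x # y # r) = (x \<in> V \<and> {x, y} \<in> E \<and> wk V E (y # r))"

lemma is_walk_Cons2: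
  "is_walk V E (x # y # r) \<longleftrightarrow> x \<in> V \<and> {x, y} \<in> E \<and> is_walk V E (y # r)"
  unfolding is_walk_def
proof (intro iffI conjI allI impI)
  assume h: "x # y # r \<noteq> [] \<and> set (x # y # r) \<subseteq> V \<and>
    (\<forall>i. Suc i < length (x # y # r) \<longrightarrow> {(x # y # r) ! i, (x # y # r) ! Suc i} \<in> E)"
  then show "x \<in> V" by simp
  have "{(x # y # r) ! 0, (x # y # r) ! Suc 0} \<in> E" using h[THEN conjunct2, THEN conjunct2, rule_format, of 0] by simp
  then show "{x, y} \<in> E" by simp
  from h show "y # r \<noteq> []" "set (y # r) \<subseteq> V" by auto
  fix i assume "Suc i < length (y # r)"
  then have "{(x # y # r) ! Suc i, (x # y # r) ! Suc (Suc i)} \<in> E" using h[THEN conjunct2, THEN conjunct2, rule_format, of "Suc i"] by simp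
  then show "{(y # r) ! i, (y # r) ! Suc i} \<in> E" by simp
next
  assume h: "x \<in> V \<and> {x, y} \<in> E \<and> y # r \<noteq> [] \<and> set (y # r) \<subseteq> V \<and>
    (\<forall>i. Suc i < length (y # r) \<longrightarrow> {(y # r) ! i, (y # r) ! Suc i} \<in> E)"
  show "x # y # r \<noteq> []" by simp
  from h show "set (x # y # r) \<subseteq> V" by auto
  fix i assume i: "Suc i < length (x # y # r)"
  show "{(x # y # r) ! i, (x # y # r) ! Suc i} \<in> E"
  proof (cases i)
    case 0 then show ?thesis using h by simp
  next
    case (Suc j) then show ?thesis using h i by simp
  qed
qed

lemma is_walk_wk: "is_walk V E xs = wk V E xs"
proof (induction V E xs rule: wk.induct)
  case (1 V E) then show ?case by (simp add: is_walk_def)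
next
  case (2 V E x) then show ?case by (simp add: is_walk_def)
next
  case (3 V E x y r) then show ?case by (simp add: is_walk_Cons2)
qed

lemma wk_set: "wk V E xs \<Longrightarrow> set xs \<subseteq> V"
  by (induction V E xs rule: wk.induct) auto

lemma wk_ne: "wk V E xs \<Longrightarrow> xs \<noteq> []"
  by auto

lemma wk_glue: "wk V E xs \<Longrightarrow> wk V E ys \<Longrightarrow> last xs = hd ys \<Longrightarrow> wk V E (xs @ tl ys)"
proof (induction V E xs rule: wk.induct)
  case (1 V E) then show ?case by simp
next
  case (2 V E x) then show ?case by (cases ys) auto
next
  case (3 V E x y r)
  then have "wk V E ((y # r) @ tl ys)" by simp
  then show ?case using 3 by (cases "r @ tl ys") auto
qed

lemma last_glue: "ys \<noteq> [] \<Longrightarrow> xs \<noteq> [] \<Longrightarrow> last xs = hd ys \<Longrightarrow> last (xs @ tl ys) = last ys"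
  by (cases ys) auto

lemma hd_glue: "xs \<noteq> [] \<Longrightarrow> hd (xs @ tl ys) = hd xs"
  by simp

lemma wk_prefix: "wk V E (xs @ ys) \<Longrightarrow> xs \<noteq> [] \<Longrightarrow> wk V E xs"
proof (induction xs)
  case Nil then show ?case by simp
next
  case (Cons a xs)
  show ?case
  proof (cases xs)
    case Nil then show ?thesis using Cons.prems by (cases ys) auto
  next
    case (Cons b zs) then show ?thesis using Cons.prems Cons.IH by auto
  qed
qed

lemma wk_suffix: "wk V E (xs @ ys) \<Longrightarrow> ys \<noteq> [] \<Longrightarrow> wk V E ys"
proof (induction xs)
  case Nil then show ?case by simp
next
  case (Cons a xs)
  then show ?case by (cases "xs @ ys") auto
qed

lemma wk_split_edge: "wk V E (p @ v # q) \<Longrightarrow> p \<noteq> [] \<Longrightarrow> {last p, v} \<in> E"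
proof (induction p)
  case Nil then show ?case by simp
next
  case (Cons a p)
  then show ?case by (cases p) auto
qed

lemma wk_mono: "wk V' E' xs \<Longrightarrow> V' \<subseteq> V \<Longrightarrow> E' \<subseteq> E \<Longrightarrow> wk V E xs"
  by (induction V' E' xs rule: wk.induct) auto

lemma wk_del: "wk V E xs \<Longrightarrow> v \<notin> set xs \<Longrightarrow> wk (V - {v}) (del_vertex_E E v) xs"
  by (induction V E xs rule: wk.induct) (auto simp: del_vertex_E_def)

lemma wk_distinct:
  "wk V E xs \<Longrightarrow> \<exists>ys. wk V E ys \<and> distinct ys \<and> hd ys = hd xs \<and> last ys = last xs
     \<and> length ys \<le> length xs"
proof (induction "length xs" arbitrary: xs rule: less_induct)
  case less
  show ?case
  proof (cases "distinct xs")
    case True then show ?thesis using less.prems by blast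
  next
    case False
    then obtain a y b c where xs: "xs = a @ [y] @ b @ [y] @ c"
      using not_distinct_decomp by blast
    have w1: "wk V E (a @ [y])" using less.prems xs wk_prefix[of V E "a @ [y]" "b @ [y] @ c"] by simp
    have w2: "wk V E (y # c)" using less.prems xs wk_suffix[of V E "a @ [y] @ b" "y # c"] by simp
    have "wk V E ((a @ [y]) @ tl (y # c))" using wk_glue[OF w1 w2] by simp
    then have w: "wk V E (a @ [y] @ c)" by simp
    have "length (a @ [y] @ c) < length xs" using xs by simp
    from less.hyps[OF this w] obtain ys where "wk V E ys \<and> distinct ys \<and> hd ys = hd (a @ [y] @ c)
       \<and> last ys = last (a @ [y] @ c) \<and> length ys \<le> length (a @ [y] @ c)" by blast
    moreover have "hd (a @ [y] @ c) = hd xs" using xs by (cases a) auto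
    moreover have "last (a @ [y] @ c) = last xs" using xs by (cases "c = []") auto
    moreover have "length (a @ [y] @ c) \<le> length xs" using xs by simp
    ultimately show ?thesis by (metis order_trans)
  qed
qed

lemma no_loop: "simple_graph V E \<Longrightarrow> {x, x} \<notin> E"
proof
  assume "simple_graph V E" "{x, x} \<in> E"
  then obtain u w where "{x, x} = {u, w}" "u \<noteq> w" unfolding simple_graph_def by blast
  then have "u \<in> {x}" "w \<in> {x}" by (auto dest: sym)
  then show False using \<open>u \<noteq> w\<close> by simp
qed

lemma convert:
  assumes sg: "simple_graph V E"
    and cyc: "\<forall>xs. is_cycle V E xs \<longrightarrow> length xs \<le> 4"
    and conn': "connected_graph (V - {v}) (del_vertex_E E v)"
  shows "wk V E xs \<Longrightarrow> hd xs \<noteq> v \<Longrightarrow> last xs \<noteq> v \<Longrightarrow>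
    \<exists>ys. wk (V - {v}) (del_vertex_E E v) ys \<and> hd ys = hd xs \<and> last ys = last xs
      \<and> length ys \<le> length xs"
proof (induction "length (filter (\<lambda>x. x = v) xs)" arbitrary: xs rule: less_induct)
  case less
  let ?V' = "V - {v}" and ?E' = "del_vertex_E E v"
  show ?case
  proof (cases "v \<in> set xs")
    case False then show ?thesis using less.prems wk_del[of V E xs v] by blast
  next
    case True
    then obtain p q where xs: "xs = p @ v # q" by (meson split_list)
    have pne: "p \<noteq> []" using xs less.prems(2) by (cases p) auto
    have qne: "q \<noteq> []" using xs less.prems(3) by (cases q) auto
    define a where "a = last p"
    define b where "b = hd q"
    have wp: "wk V E p" using wk_prefix[of V E p "v # q"] xs less.prems pne by simp
    have wvq: "wk V E (v # q)" using wk_suffix[of V E p "v # q"] xs less.prems by simp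
    have wq: "wk V E q" and evb: "{v, b} \<in> E" using wvq qne unfolding b_def by (cases q; auto)+
    have eav: "{a, v} \<in> E" using wk_split_edge[of V E p v q] xs less.prems pne a_def by simp
    have av: "a \<noteq> v" using eav no_loop[OF sg] by auto
    have bv: "b \<noteq> v" using evb no_loop[OF sg] by auto
    have aV: "a \<in> V" using wk_set[OF wp] pne a_def by auto
    have bV: "b \<in> V" using wk_set[OF wq] qne b_def by auto
    have vV: "v \<in> V" using wk_set[OF wvq] by auto
    have "\<exists>ps. wk ?V' ?E' ps \<and> hd ps = a \<and> last ps = b \<and> length ps \<le> 3"
    proof -
      obtain ws where "is_walk ?V' ?E' ws" "hd ws = a" "last ws = b"
        using conn' aV bV av bv unfolding connected_graph_def by blast
      then obtain ps where ps: "wk ?V' ?E' ps" "distinct ps" "hd ps = a" "last ps = b"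
        using wk_distinct[of ?V' ?E' ws] by (auto simp: is_walk_wk)
      show ?thesis
      proof (cases "length ps \<le> 3")
        case True then show ?thesis using ps by blast
      next
        case False
        have vps: "v \<notin> set ps" using wk_set[OF ps(1)] by auto
        have wpsG: "wk V E ps" using wk_mono[OF ps(1)] by (auto simp: del_vertex_E_def)
        obtain r where psr: "ps = a # r" using ps(3) wk_ne[OF ps(1)] by (cases ps) auto
        have "wk V E (v # ps)" using wpsG vV eav psr by (simp add: insert_commute)
        then have "is_cycle V E (v # ps)"
          unfolding is_cycle_def using False ps vps evb wk_ne[OF ps(1)]
          by (auto simp: is_walk_wk insert_commute)
        then have "length (v # ps) \<le> 4" using cyc by blast
        then show ?thesis using False by simp
      qed
    qed
    then obtain ps where ps: "wk ?V' ?E' ps" "hd ps = a" "last ps = b" "length ps \<le> 3" by blast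
    have psne: "ps \<noteq> []" using wk_ne[OF ps(1)] .
    have vps: "v \<notin> set ps" using wk_set[OF ps(1)] by auto
    have wpsG: "wk V E ps" using wk_mono[OF ps(1)] by (auto simp: del_vertex_E_def)
    define g1 where "g1 = p @ tl ps"
    have wg1: "wk V E g1" unfolding g1_def using wk_glue[OF wp wpsG] ps(2) a_def by simp
    have lg1: "last g1 = b" unfolding g1_def using last_glue[OF psne pne] ps a_def by simp
    define g2 where "g2 = g1 @ tl q"
    have g1ne: "g1 \<noteq> []" unfolding g1_def using pne by simp
    have wg2: "wk V E g2" unfolding g2_def using wk_glue[OF wg1 wq] lg1 b_def by simp
    have hg2: "hd g2 = hd xs" unfolding g2_def g1_def using xs pne by simp
    have lg2: "last g2 = last xs" unfolding g2_def using last_glue[OF qne g1ne] lg1 b_def xs qne by simp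
    have len: "length g2 \<le> length xs" unfolding g2_def g1_def using xs ps(4) qne psne
      by (cases q; cases ps) auto
    have "filter (\<lambda>x. x = v) (tl ps) = []" using vps
      by (metis (mono_tags, lifting) filter_False list.set_sel(2) tl_Nil)
    then have "length (filter (\<lambda>x. x = v) g2) \<le> length (filter (\<lambda>x. x = v) p) + length (filter (\<lambda>x. x = v) (tl q))"
      unfolding g2_def g1_def by simp
    also have "\<dots> < length (filter (\<lambda>x. x = v) xs)" using xs qne by (cases q) auto
    finally have lt: "length (filter (\<lambda>x. x = v) g2) < length (filter (\<lambda>x. x = v) xs)" .
    from less.hyps[OF lt wg2] hg2 lg2 less.prems obtain ys where
      "wk ?V' ?E' ys" "hd ys = hd xs" "last ys = last xs" "length ys \<le> length g2" by auto
    then show ?thesis using len by (meson order_trans)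
  qed
qed


lemma dist_le: "is_walk V E xs \<Longrightarrow> dist V E (hd xs) (last xs) \<le> length xs - 1"
  unfolding dist_def
proof (rule Least_le)
  assume "is_walk V E xs"
  moreover then have "xs \<noteq> []" by (simp add: is_walk_def)
  ultimately show "\<exists>ys. is_walk V E ys \<and> hd ys = hd xs \<and> last ys = last xs \<and> length ys = Suc (length xs - 1)"
    by (intro exI[of _ xs]) (cases xs; simp)
qed

lemma dist_ex:
  assumes "connected_graph V E" "u \<in> V" "w \<in> V"
  shows "\<exists>xs. is_walk V E xs \<and> hd xs = u \<and> last xs = w \<and> length xs = Suc (dist V E u w)"
proof -
  obtain xs where xs: "is_walk V E xs" "hd xs = u" "last xs = w"
    using assms unfolding connected_graph_def by blast
  then have "xs \<noteq> []" by (simp add: is_walk_def)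
  then have "\<exists>n xs. is_walk V E xs \<and> hd xs = u \<and> last xs = w \<and> length xs = Suc n"
    using xs by (intro exI[of _ "length xs - 1"] exI[of _ xs]) (cases xs; simp)
  then show ?thesis unfolding dist_def by (rule LeastI_ex)
qed

lemma dist_pos:
  assumes "connected_graph V E" "u \<in> V" "w \<in> V" "u \<noteq> w"
  shows "1 \<le> dist V E u w"
proof (rule ccontr)
  assume "\<not> 1 \<le> dist V E u w"
  then have "dist V E u w = 0" by simp
  with dist_ex[OF assms(1-3)] obtain xs where "hd xs = u" "last xs = w" "length xs = 1" by auto
  then show False using assms(4) by (cases xs) auto
qed

lemma dist_eq:
  assumes sg: "simple_graph V E"
    and cyc: "\<forall>xs. is_cycle V E xs \<longrightarrow> length xs \<le> 4"
    and conn: "connected_graph V E"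
    and conn': "connected_graph (V - {v}) (del_vertex_E E v)"
    and u: "u \<in> V - {v}" and w: "w \<in> V - {v}"
  shows "dist (V - {v}) (del_vertex_E E v) u w = dist V E u w"
proof (rule antisym)
  obtain xs where xs: "is_walk V E xs" "hd xs = u" "last xs = w" "length xs = Suc (dist V E u w)"
    using dist_ex[OF conn] u w by blast
  obtain ys where ys: "wk (V - {v}) (del_vertex_E E v) ys" "hd ys = u" "last ys = w" "length ys \<le> length xs"
    using convert[OF sg cyc conn', of xs] xs u w by (auto simp: is_walk_wk)
  have "dist (V - {v}) (del_vertex_E E v) u w \<le> length ys - 1"
    using dist_le[of "V - {v}" "del_vertex_E E v" ys] ys by (simp add: is_walk_wk)
  then show "dist (V - {v}) (del_vertex_E E v) u w \<le> dist V E u w" using ys(4) xs(4) by simp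
next
  obtain xs where xs: "is_walk (V - {v}) (del_vertex_E E v) xs" "hd xs = u" "last xs = w"
    "length xs = Suc (dist (V - {v}) (del_vertex_E E v) u w)"
    using dist_ex[OF conn'] u w by blast
  have "wk V E xs" using wk_mono[of "V - {v}" "del_vertex_E E v" xs V E] xs(1)
    by (auto simp: is_walk_wk del_vertex_E_def)
  then have "dist V E u w \<le> length xs - 1" using dist_le[of V E xs] xs by (simp add: is_walk_wk)
  then show "dist V E u w \<le> dist (V - {v}) (del_vertex_E E v) u w" using xs(4) by simp
qed

theorem theorem4:
  fixes V :: "'a set" and E :: "'a set set"
  assumes "simple_graph V E"
    and "connected_graph V E"
    and "\<not> is_tree V E"
    and "\<forall>xs. is_cycle V E xs \<longrightarrow> length xs \<le> 4"
  shows "\<not> (\<exists>v. good_vertex V E v)"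
proof
  assume "\<exists>v. good_vertex V E v"
  then obtain v where vV: "v \<in> V" and eq: "wiener V E = wiener (V - {v}) (del_vertex_E E v)"
    unfolding good_vertex_def del_vertex_V_def by blast
  let ?V' = "V - {v}" and ?E' = "del_vertex_E E v"
  have fin: "finite V" using assms(1) by (simp add: simple_graph_def)
  have conn': "connected_graph ?V' ?E'"
  proof (rule ccontr)
    assume "\<not> connected_graph ?V' ?E'"
    then show False using eq assms(2) by (simp add: wiener_def)
  qed
  then obtain u0 where u0: "u0 \<in> ?V'" unfolding connected_graph_def by blast
  let ?d = "dist V E"
  define S0 where "S0 = (\<Sum>u\<in>?V'. \<Sum>w\<in>?V'. ?d u w)"
  have S': "(\<Sum>u\<in>?V'. \<Sum>w\<in>?V'. dist ?V' ?E' u w) = S0"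
    unfolding S0_def using dist_eq[OF assms(1) assms(4) assms(2) conn'] by (intro sum.cong) auto
  have Vins: "V = insert v ?V'" using vV by blast
  have finV': "finite ?V'" using fin by simp
  have inner: "\<And>u. (\<Sum>w\<in>V. ?d u w) = ?d u v + (\<Sum>w\<in>?V'. ?d u w)"
    using sum.insert[OF finV', of v] Vins by (metis Diff_iff insertI1)
  have "(\<Sum>u\<in>V. \<Sum>w\<in>V. ?d u w) = (\<Sum>w\<in>V. ?d v w) + (\<Sum>u\<in>?V'. \<Sum>w\<in>V. ?d u w)"
    using sum.insert[OF finV', of v "\<lambda>u. \<Sum>w\<in>V. ?d u w"] Vins by (metis Diff_iff insertI1)
  also have "(\<Sum>u\<in>?V'. \<Sum>w\<in>V. ?d u w) = (\<Sum>u\<in>?V'. ?d u v) + S0"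
    unfolding S0_def inner by (simp add: sum.distrib)
  finally have S: "(\<Sum>u\<in>V. \<Sum>w\<in>V. ?d u w) = (\<Sum>w\<in>V. ?d v w) + (\<Sum>u\<in>?V'. ?d u v) + S0" by simp
  have A: "1 \<le> (\<Sum>w\<in>V. ?d v w)"
  proof -
    have "1 \<le> ?d v u0" using dist_pos[OF assms(2) vV] u0 by auto
    also have "\<dots> \<le> (\<Sum>w\<in>V. ?d v w)" using u0 fin by (intro member_le_sum) auto
    finally show ?thesis .
  qed
  have B: "1 \<le> (\<Sum>u\<in>?V'. ?d u v)"
  proof -
    have "1 \<le> ?d u0 v" using dist_pos[OF assms(2) _ vV] u0 by auto
    also have "\<dots> \<le> (\<Sum>u\<in>?V'. ?d u v)" using u0 finV' by (intro member_le_sum) auto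
    finally show ?thesis .
  qed
  have "wiener V E = enat ((\<Sum>u\<in>V. \<Sum>w\<in>V. ?d u w) div 2)" using assms(2) by (simp add: wiener_def)
  moreover have "wiener ?V' ?E' = enat (S0 div 2)" using conn' S' by (simp add: wiener_def)
  moreover have "S0 div 2 < (\<Sum>u\<in>V. \<Sum>w\<in>V. ?d u w) div 2" using S A B by simp
  ultimately show False using eq by simp
qed

end
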